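(* Assume: (i) there is $L_f>0$ with $\|f(w,t)-f(y,t)\|_2\le L_f\|w-y\|_2$ for all $w,y\in\mathbb{R}^{N_s}$, $t\in[0,T]$; (ii) $\Delta t<\sigma_{\min}(A_{LM})/(L_f\sigma_{\max}(B_{LM}))$; (iii) there is $P>0$ with $\|\bar A\,\bar r(w)\|_2\ge P\|\bar r(w)\|_2$ for all $w\in\mathcal{S}$. Let $x\in\mathbb{R}^{N_sN_t}$ satisfy $\bar r(x)=0$ (the full-order solution) and let $\tilde x\in\arg\min_{w\in\mathcal{S}}\|\bar A\,\bar r(w)\|_2$ (the ST-LSPG solution). Then $$\|x-\tilde x\|_2\le\frac1P\,\frac{\sigma_{\max}(\bar A A_{LM})+\Delta t L_f\sigma_{\max}(\bar A B_{LM})}{\sigma_{\min}(A_{LM})-\Delta t L_f\sigma_{\max}(B_{LM})}\,\min_{w\in\mathcal{S}}\|x-w\|_2.$$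
   Context: Let $f:\mathbb{R}^{N_s}\times[0,T]\to\mathbb{R}^{N_s}$ be the velocity of the ODE $\dot x=f(x,t)$, $x(0)=x^0\in\mathbb{R}^{N_s}$. Use a uniform time grid $t^n=n\Delta t$, $n=0,\dots,N_t$, $\Delta t=T/N_t$. A linear multistep scheme is given by integers $k(n)\le n$ and coefficients $\alpha_j^n,\beta_j^n\in\mathbb{R}$, $j=0,\dots,k(n)$, $n=1,\dots,N_t$, with $\alpha_0^n\neq0$. For $w=(w^1,\dots,w^{N_t})\in\mathbb{R}^{N_sN_t}$ (blocks $w^n\in\mathbb{R}^{N_s}$) set $w^0:=x^0$ and define the residual at step $n$ by $r^n(w)=\sum_{j=0}^{k(n)}\alpha_j^n w^{n-j}-\Delta t\sum_{j=0}^{k(n)}\beta_j^n f(w^{n-j},t^{n-j})$, and the space–time residual $\bar r(w)=(r^1(w),\dots,r^{N_t}(w))\in\mathbb{R}^{N_sN_t}$. Let $A_{LM},B_{LM}\in\mathbb{R}^{N_sN_t\times N_sN_t}$ be the block lower-triangular matrices (blocks of size $N_s\times N_s$) whose $(n,n-j)$ block is $\alpha_j^n I_{N_s}$, resp. $\beta_j^n I_{N_s}$, for $0\le j\le k(n)$ with $n-j\ge1$, and zero otherwise. $\sigma_{\max}(M)$, $\sigma_{\min}(M)$ denote the largest and smallest singular values of $M$; $\|\cdot\|_2$ is the Euclidean norm on $\mathbb{R}^{N_sN_t}$. The space–time trial subspace is the affine subspace $\mathcal{S}=\{(x^0,\dots,x^0)+\sum_{i=1}^{n_{st}}c_i\pi_i: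 c\in\mathbb{R}^{n_{st}}\}\subseteq\mathbb{R}^{N_sN_t}$ for given vectors $\pi_1,\dots,\pi_{n_{st}}\in\mathbb{R}^{N_sN_t}$; $\bar A\in\mathbb{R}^{\bar z\times N_sN_t}$ is a weighting matrix. *)

theory Defs
  imports "HOL-Analysis.Analysis" "Jordan_Normal_Form.Matrix" "Jordan_Normal_Form.Char_Poly"
begin

definition vnorm2 :: "real vec \<Rightarrow> real" where
  "vnorm2 v = sqrt (\<Sum>i<dim_vec v. (v $ i)\<^sup>2)"

text \<open>Largest / smallest singular value: square roots of the largest / smallest
  eigenvalue of M^T M (M^T M is symmetric positive semidefinite, so all its
  eigenvalues are real and nonnegative).  sigma_min is only applied to square matrices.\<close>
definition sigma_max :: "real mat \<Rightarrow> real" where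
  "sigma_max M = sqrt (Max {l. eigenvalue (transpose_mat M * M) l})"

definition sigma_min :: "real mat \<Rightarrow> real" where
  "sigma_min M = sqrt (Min {l. eigenvalue (transpose_mat M * M) l})"

text \<open>Blocks of a space-time vector w (dimension Ns*Nt); block 0 is x0,
  block n (1 \<le> n \<le> Nt) consists of entries (n-1)*Ns .. n*Ns-1.\<close>
definition blk :: "nat \<Rightarrow> real vec \<Rightarrow> real vec \<Rightarrow> nat \<Rightarrow> real vec" where
  "blk Ns x0 w n = (if n = 0 then x0 else vec Ns (\<lambda>i. w $ ((n - 1) * Ns + i)))"

definition lm_res ::
  "nat \<Rightarrow> real \<Rightarrow> (real vec \<Rightarrow> real \<Rightarrow> real vec) \<Rightarrow> real vec \<Rightarrow>
   (nat \<Rightarrow> nat) \<Rightarrow> (nat \<Rightarrow> nat \<Rightarrow> real) \<Rightarrow> (nat \<Rightarrow> nat \<Rightarrow> real) \<Rightarrow>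
   real vec \<Rightarrow> nat \<Rightarrow> real vec" where
  "lm_res Ns dt f x0 k alpha beta w n =
     vec Ns (\<lambda>i. (\<Sum>j\<in>{0..k n}. alpha n j * (blk Ns x0 w (n - j) $ i))
        - dt * (\<Sum>j\<in>{0..k n}. beta n j * (f (blk Ns x0 w (n - j)) (real (n - j) * dt) $ i)))"

definition st_res ::
  "nat \<Rightarrow> nat \<Rightarrow> real \<Rightarrow> (real vec \<Rightarrow> real \<Rightarrow> real vec) \<Rightarrow> real vec \<Rightarrow>
   (nat \<Rightarrow> nat) \<Rightarrow> (nat \<Rightarrow> nat \<Rightarrow> real) \<Rightarrow> (nat \<Rightarrow> nat \<Rightarrow> real) \<Rightarrow>
   real vec \<Rightarrow> real vec" where
  "st_res Ns Nt dt f x0 k alpha beta w =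
     vec (Ns * Nt) (\<lambda>p. lm_res Ns dt f x0 k alpha beta w (p div Ns + 1) $ (p mod Ns))"

text \<open>Block lower-triangular matrix whose (n, n-j) block is c n j * I for
  0 \<le> j \<le> k n, n - j \<ge> 1 (blocks indexed 1..Nt), zero otherwise.\<close>
definition lm_mat :: "nat \<Rightarrow> nat \<Rightarrow> (nat \<Rightarrow> nat) \<Rightarrow> (nat \<Rightarrow> nat \<Rightarrow> real) \<Rightarrow> real mat" where
  "lm_mat Ns Nt k c = mat (Ns * Nt) (Ns * Nt) (\<lambda>(p, q).
      let n = p div Ns + 1; m = q div Ns + 1 in
      if p mod Ns = q mod Ns \<and> m \<le> n \<and> n - m \<le> k n then c n (n - m) else 0)"

text \<open>Affine trial subspace (x0,...,x0) + span{pi_1,...,pi_nst}.\<close>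
definition trial_space :: "nat \<Rightarrow> nat \<Rightarrow> real vec \<Rightarrow> nat \<Rightarrow> (nat \<Rightarrow> real vec) \<Rightarrow> real vec set" where
  "trial_space Ns Nt x0 nst pib =
     {vec (Ns * Nt) (\<lambda>p. x0 $ (p mod Ns) + (\<Sum>i\<in>{1..nst}. c i * (pib i $ p))) | c. True}"

end

theory Submission
  imports Defs
begin


lemma sp_self_sum: "scalar_prod (v::real vec) v = (\<Sum>i<dim_vec v. (vec_index v i)^2)"
  by (simp add: scalar_prod_def power2_eq_square lessThan_atLeast0)

lemma vnorm2_sp: "vnorm2 v = sqrt (scalar_prod v v)"
  by (simp add: vnorm2_def sp_self_sum)

lemma sp_self_nonneg: "scalar_prod (v::real vec) v \<ge> 0"
  by (simp add: sp_self_sum sum_nonneg)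

lemma sp_self_zero: assumes "v \<in> carrier_vec n" "scalar_prod (v::real vec) v = 0"
  shows "v = 0\<^sub>v n"
proof -
  have "\<forall>i\<in>{..<dim_vec v}. (vec_index v i)^2 = 0"
    using assms(2) by (subst sum_nonneg_eq_0_iff[symmetric]) (auto simp: sp_self_sum)
  then show ?thesis using assms(1) by (auto intro!: eq_vecI)
qed

lemma quad_zero:
  fixes a b :: real
  assumes "\<And>t. 2 * t * a + t^2 * b \<le> 0"
  shows "a = 0"
proof (rule ccontr)
  assume a: "a \<noteq> 0"
  define s where "s = 1 / (\<bar>b\<bar> + 1)"
  have s: "s > 0" unfolding s_def by simp
  have "2 * (a * s) * a + (a * s)^2 * b \<le> 0" by (rule assms)
  hence "a^2 * s * (2 + s * b) \<le> 0" by (simp add: power2_eq_square algebra_simps)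
  moreover have "a^2 * s > 0" using a s by simp
  ultimately have "2 + s * b \<le> 0"
  proof -
    assume h1: "a^2 * s * (2 + s * b) \<le> 0" and h2: "a^2 * s > 0"
    show ?thesis
    proof (rule ccontr)
      assume "\<not> 2 + s * b \<le> 0"
      hence "2 + s * b > 0" by simp
      hence "a^2 * s * (2 + s * b) > 0" using h2 by simp
      thus False using h1 by simp
    qed
  qed
  moreover have "s * \<bar>b\<bar> < 1" unfolding s_def by (simp add: field_simps)
  moreover have "- (s * \<bar>b\<bar>) \<le> s * b"
  proof -
    have "-\<bar>b\<bar> \<le> b" by simp
    hence "s * (-\<bar>b\<bar>) \<le> s * b" using s by (intro mult_left_mono) auto
    thus ?thesis by simp
  qed
  ultimately show False by linarith
qed

lemma quad_sum: assumes S: "S \<in> carrier_mat n n" and w: "w \<in> carrier_vec n"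
  shows "scalar_prod w (S *\<^sub>v w) = (\<Sum>i<n. \<Sum>j<n. vec_index w i * S $$ (i,j) * vec_index w j)"
  using S w by (simp add: scalar_prod_def lessThan_atLeast0 Matrix.row_def sum_distrib_left mult.assoc)

lemma compact_K: "compact ((Pi UNIV (\<lambda>i. if i < (n::nat) then {-1..1::real} else {0})))"
proof -
  have "compactin (product_topology (\<lambda>i. euclidean) UNIV)
      (PiE UNIV (\<lambda>i. if i < (n::nat) then {-1..1::real} else {0}))"
    by (subst compactin_PiE) (auto simp: compactin_euclidean_iff)
  then show ?thesis
    by (simp add: euclidean_product_topology compactin_euclidean_iff PiE_UNIV_domain)
qed

lemma coord_cont: "continuous_on A (\<lambda>g::nat\<Rightarrow>real. g i)"
  by (rule continuous_on_subset[OF continuous_on_product_coordinates]) simp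

lemma sym_max:
  fixes S :: "real mat"
  assumes S: "S \<in> carrier_mat n n" and sym: "transpose_mat S = S" and n: "0 < n"
  shows "\<exists>\<mu>. eigenvalue S \<mu> \<and> (\<forall>w\<in>carrier_vec n. scalar_prod w (S *\<^sub>v w) \<le> \<mu> * scalar_prod w w)"
proof -
  define Q where "Q = (\<lambda>g::nat\<Rightarrow>real. \<Sum>i<n. \<Sum>j<n. g i * S $$ (i,j) * g j)"
  define K where "K = (Pi UNIV (\<lambda>i. if i < n then {-1..1::real} else {0})) \<inter> {g. (\<Sum>i<n. (g i)^2) = 1}"
  have cont: "continuous_on A Q" for A
    unfolding Q_def by (intro continuous_intros coord_cont)
  have cK: "compact K" unfolding K_def
    by (rule compact_Int_closed[OF compact_K closed_Collect_eq]) (intro continuous_intros coord_cont)+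
  have "(\<Sum>i<n. ((\<lambda>i::nat. if i = 0 then 1 else (0::real)) i)^2) = (\<Sum>i<n. if i = 0 then 1 else 0)"
    by (intro sum.cong) auto
  also have "\<dots> = 1" using n by simp
  finally have "(\<lambda>i::nat. if i = 0 then 1 else (0::real)) \<in> K" using n
    by (auto simp: K_def)
  hence ne: "K \<noteq> {}" by blast
  obtain g0 where g0: "g0 \<in> K" and gmax: "\<forall>g\<in>K. Q g \<le> Q g0"
    using continuous_attains_sup[OF cK ne cont] by blast
  define \<mu> where "\<mu> = Q g0"
  define v where "v = vec n g0"
  have v: "v \<in> carrier_vec n" unfolding v_def by simp
  have vv: "scalar_prod v v = 1" using g0 by (simp add: v_def sp_self_sum K_def)
  have qv: "scalar_prod v (S *\<^sub>v v) = \<mu>"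
    unfolding quad_sum[OF S v] unfolding \<mu>_def Q_def v_def by (intro sum.cong refl) auto
  have unit: "scalar_prod w (S *\<^sub>v w) \<le> \<mu>" if w: "w \<in> carrier_vec n" "scalar_prod w w = 1" for w
  proof -
    define g where "g = (\<lambda>i. if i < n then vec_index w i else 0)"
    have sq: "(\<Sum>i<n. (g i)^2) = 1" using w by (simp add: g_def sp_self_sum)
    have "(g i)^2 \<le> 1" if "i < n" for i
    proof -
      have "(g i)^2 \<le> (\<Sum>i<n. (g i)^2)"
        by (rule member_le_sum) (use that in auto)
      then show ?thesis using sq by simp
    qed
    hence "\<bar>g i\<bar> \<le> 1" if "i < n" for i using that by (simp add: abs_square_le_1[symmetric])
    hence "g \<in> K" using sq unfolding K_def by (auto simp: abs_le_iff) (auto simp: g_def)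
    hence "Q g \<le> \<mu>" using gmax \<mu>_def by blast
    moreover have "Q g = scalar_prod w (S *\<^sub>v w)"
      unfolding quad_sum[OF S w(1)] Q_def g_def by (intro sum.cong refl) auto
    ultimately show ?thesis by simp
  qed
  have bound: "\<forall>w\<in>carrier_vec n. scalar_prod w (S *\<^sub>v w) \<le> \<mu> * scalar_prod w w"
  proof
    fix w :: "real vec" assume w: "w \<in> carrier_vec n"
    show "scalar_prod w (S *\<^sub>v w) \<le> \<mu> * scalar_prod w w"
    proof (cases "scalar_prod w w = 0")
      case True
      then have "w = 0\<^sub>v n" using sp_self_zero w by blast
      then show ?thesis using S by simp
    next
      case False
      then have pos: "scalar_prod w w > 0" using sp_self_nonneg[of w] by linarith
      define c where "c = 1 / sqrt (scalar_prod w w)"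
      have cc: "c * c = 1 / scalar_prod w w" using pos unfolding c_def
        by (simp add: real_sqrt_mult[symmetric])
      have w': "c \<cdot>\<^sub>v w \<in> carrier_vec n" using w by simp
      have "scalar_prod (c \<cdot>\<^sub>v w) (c \<cdot>\<^sub>v w) = c * c * scalar_prod w w"
        using w by (simp add: smult_scalar_prod_distrib scalar_prod_smult_distrib)
      also have "\<dots> = 1" using cc pos by simp
      finally have "scalar_prod (c \<cdot>\<^sub>v w) (S *\<^sub>v (c \<cdot>\<^sub>v w)) \<le> \<mu>" using unit[OF w'] by simp
      moreover have "scalar_prod (c \<cdot>\<^sub>v w) (S *\<^sub>v (c \<cdot>\<^sub>v w)) = c * c * scalar_prod w (S *\<^sub>v w)"
        using w S by (simp add: mult_mat_vec smult_scalar_prod_distrib scalar_prod_smult_distrib[of _ n])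
      ultimately have "scalar_prod w (S *\<^sub>v w) / scalar_prod w w \<le> \<mu>" using cc by simp
      then show ?thesis using pos by (simp add: pos_divide_le_eq mult.commute)
    qed
  qed
  define r where "r = S *\<^sub>v v - \<mu> \<cdot>\<^sub>v v"
  have Sv: "S *\<^sub>v v \<in> carrier_vec n" using S v by simp
  have r: "r \<in> carrier_vec n" unfolding r_def using Sv v by simp
  have Sr: "S *\<^sub>v r \<in> carrier_vec n" using S r by simp
  have symm: "scalar_prod v (S *\<^sub>v r) = scalar_prod r (S *\<^sub>v v)"
    using transpose_vec_mult_scalar[OF S r v] sym comm_scalar_prod[OF Sv r] by simp
  have rr0: "scalar_prod r (S *\<^sub>v v - \<mu> \<cdot>\<^sub>v v) = scalar_prod r (S *\<^sub>v v) - \<mu> * scalar_prod r v"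
    using r Sv v by (simp add: scalar_prod_minus_distrib[of r n] scalar_prod_smult_distrib[of r n])
  have rr: "scalar_prod r r = scalar_prod r (S *\<^sub>v v) - \<mu> * scalar_prod r v"
    using rr0 unfolding r_def[symmetric] .
  have key: "2 * t * scalar_prod r r + t^2 * (scalar_prod r (S *\<^sub>v r) - \<mu> * scalar_prod r r) \<le> 0" for t
  proof -
    have z: "v + t \<cdot>\<^sub>v r \<in> carrier_vec n" using v r by simp
    have tr: "t \<cdot>\<^sub>v r \<in> carrier_vec n" using r by simp
    have Sz: "S *\<^sub>v (v + t \<cdot>\<^sub>v r) = S *\<^sub>v v + t \<cdot>\<^sub>v (S *\<^sub>v r)"
      using S v r by (simp add: mult_add_distrib_mat_vec[OF S v tr] mult_mat_vec)
    have e1: "scalar_prod (v + t \<cdot>\<^sub>v r) (S *\<^sub>v (v + t \<cdot>\<^sub>v r)) =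
       scalar_prod v (S *\<^sub>v v) + 2 * t * scalar_prod r (S *\<^sub>v v) + t^2 * scalar_prod r (S *\<^sub>v r)"
      unfolding Sz using v r Sv Sr symm
      by (simp add: add_scalar_prod_distrib[of _ n] scalar_prod_add_distrib[of _ n]
          smult_scalar_prod_distrib[of _ n] scalar_prod_smult_distrib[of _ n] power2_eq_square algebra_simps)
    have e2: "scalar_prod (v + t \<cdot>\<^sub>v r) (v + t \<cdot>\<^sub>v r) =
       scalar_prod v v + 2 * t * scalar_prod r v + t^2 * scalar_prod r r"
      using v r comm_scalar_prod[OF v r]
      by (simp add: add_scalar_prod_distrib[of _ n] scalar_prod_add_distrib[of _ n]
          smult_scalar_prod_distrib[of _ n] scalar_prod_smult_distrib[of _ n] power2_eq_square algebra_simps)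
    have "scalar_prod (v + t \<cdot>\<^sub>v r) (S *\<^sub>v (v + t \<cdot>\<^sub>v r)) \<le> \<mu> * scalar_prod (v + t \<cdot>\<^sub>v r) (v + t \<cdot>\<^sub>v r)"
      using bound z by blast
    then have H: "\<mu> + 2 * t * scalar_prod r (S *\<^sub>v v) + t^2 * scalar_prod r (S *\<^sub>v r)
       \<le> \<mu> * (1 + 2 * t * scalar_prod r v + t^2 * scalar_prod r r)" unfolding e1 e2 qv vv .
    have "2 * t * scalar_prod r r + t^2 * (scalar_prod r (S *\<^sub>v r) - \<mu> * scalar_prod r r)
      = (\<mu> + 2 * t * scalar_prod r (S *\<^sub>v v) + t^2 * scalar_prod r (S *\<^sub>v r))
        - \<mu> * (1 + 2 * t * scalar_prod r v + t^2 * scalar_prod r r)"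
      unfolding rr by (simp add: algebra_simps)
    then show ?thesis using H by linarith
  qed
  have "scalar_prod r r = 0" by (rule quad_zero[OF key])
  hence r0: "r = 0\<^sub>v n" using sp_self_zero r by blast
  have eig: "S *\<^sub>v v = \<mu> \<cdot>\<^sub>v v"
  proof (rule eq_vecI)
    fix i assume i: "i < dim_vec (\<mu> \<cdot>\<^sub>v v)"
    have "vec_index r i = 0" using r0 i v by simp
    then show "vec_index (S *\<^sub>v v) i = vec_index (\<mu> \<cdot>\<^sub>v v) i" using i v Sv unfolding r_def by simp
  qed (use S v in simp)
  have "v \<noteq> 0\<^sub>v n" using vv by auto
  hence "eigenvector S v \<mu>" using eig v S by (simp add: eigenvector_def)
  hence "eigenvalue S \<mu>" by (auto simp: eigenvalue_def)
  with bound show ?thesis by blast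
qed

lemma eig_finite: assumes S: "(S::real mat) \<in> carrier_mat n n" shows "finite {l. eigenvalue S l}"
proof -
  have "char_poly S \<noteq> 0" using degree_monic_char_poly[OF S] by auto
  then show ?thesis unfolding eigenvalue_root_char_poly[OF S] by (rule poly_roots_finite)
qed

lemma gram: assumes M: "(M::real mat) \<in> carrier_mat m n" and v: "v \<in> carrier_vec n"
  shows "scalar_prod (M *\<^sub>v v) (M *\<^sub>v v) = scalar_prod v ((transpose_mat M * M) *\<^sub>v v)"
proof -
  have Mv: "M *\<^sub>v v \<in> carrier_vec m" using M v by simp
  have MT: "transpose_mat M \<in> carrier_mat n m" using M by simp
  have "(transpose_mat M * M) *\<^sub>v v = transpose_mat M *\<^sub>v (M *\<^sub>v v)"
    by (rule assoc_mult_mat_vec[OF MT M v])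
  moreover have "transpose_mat M *\<^sub>v (M *\<^sub>v v) \<in> carrier_vec n" using MT Mv by simp
  ultimately show ?thesis
    using transpose_vec_mult_scalar[OF M v Mv] comm_scalar_prod[of v n] v by simp
qed

lemma gram_sym: assumes M: "(M::real mat) \<in> carrier_mat m n"
  shows "transpose_mat M * M \<in> carrier_mat n n" "transpose_mat (transpose_mat M * M) = transpose_mat M * M"
  using M by (auto simp: transpose_mult[of _ n m _ n])

lemma sigma_max_bound: assumes M: "(M::real mat) \<in> carrier_mat m n" and n: "0 < n" and v: "v \<in> carrier_vec n"
  shows "vnorm2 (M *\<^sub>v v) \<le> sigma_max M * vnorm2 v"
proof -
  let ?S = "transpose_mat M * M"
  obtain \<mu> where ev: "eigenvalue ?S \<mu>" and b: "\<forall>w\<in>carrier_vec n. scalar_prod w (?S *\<^sub>v w) \<le> \<mu> * scalar_prod w w"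
    using sym_max[OF gram_sym[OF M] n] by blast
  have "\<mu> \<le> Max {l. eigenvalue ?S l}"
    using ev eig_finite[OF gram_sym(1)[OF M]] by (intro Max_ge) auto
  hence "\<mu> * scalar_prod v v \<le> Max {l. eigenvalue ?S l} * scalar_prod v v"
    using sp_self_nonneg[of v] by (rule mult_right_mono)
  hence "scalar_prod (M *\<^sub>v v) (M *\<^sub>v v) \<le> Max {l. eigenvalue ?S l} * scalar_prod v v"
    using b v gram[OF M v] by force
  hence "sqrt (scalar_prod (M *\<^sub>v v) (M *\<^sub>v v)) \<le> sqrt (Max {l. eigenvalue ?S l}) * sqrt (scalar_prod v v)"
    by (simp add: real_sqrt_mult[symmetric])
  then show ?thesis by (simp add: vnorm2_sp sigma_max_def)
qed

lemma sigma_min_bound: assumes A: "(A::real mat) \<in> carrier_mat n n" and n: "0 < n" and v: "v \<in> carrier_vec n"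
  shows "sigma_min A * vnorm2 v \<le> vnorm2 (A *\<^sub>v v)"
proof -
  let ?S = "transpose_mat A * A"
  have S: "?S \<in> carrier_mat n n" and sym: "transpose_mat ?S = ?S" using gram_sym[OF A] by auto
  have S': "- ?S \<in> carrier_mat n n" using S by simp
  have sym': "transpose_mat (- ?S) = - ?S" using sym by (simp add: transpose_uminus)
  obtain \<mu> where ev: "eigenvalue (- ?S) \<mu>" and b: "\<forall>w\<in>carrier_vec n. scalar_prod w ((- ?S) *\<^sub>v w) \<le> \<mu> * scalar_prod w w"
    using sym_max[OF S' sym' n] by blast
  have ev': "eigenvalue ?S (- \<mu>)"
  proof -
    obtain x where x: "eigenvector (- ?S) x \<mu>" using ev by (auto simp: eigenvalue_def)
    hence xc: "x \<in> carrier_vec n" and x0: "x \<noteq> 0\<^sub>v n" and ex: "(- ?S) *\<^sub>v x = \<mu> \<cdot>\<^sub>v x"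
      using S by (auto simp: eigenvector_def)
    have "?S *\<^sub>v x = (- \<mu>) \<cdot>\<^sub>v x"
    proof (rule eq_vecI)
      fix i assume i: "i < dim_vec ((- \<mu>) \<cdot>\<^sub>v x)"
      have neg: "(- ?S) *\<^sub>v x = - (?S *\<^sub>v x)" using xc S by (intro uminus_mult_mat_vec) auto
      have "vec_index (- (?S *\<^sub>v x)) i = vec_index (\<mu> \<cdot>\<^sub>v x) i" using ex neg by simp
      then show "vec_index (?S *\<^sub>v x) i = vec_index ((- \<mu>) \<cdot>\<^sub>v x) i"
        using i xc S A index_uminus_vec(1)[of i "?S *\<^sub>v x"] by simp
    qed (use S xc A in simp)
    then have "eigenvector ?S x (- \<mu>)" using xc x0 S A by (simp add: eigenvector_def)
    then show ?thesis by (auto simp: eigenvalue_def)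
  qed
  have "Min {l. eigenvalue ?S l} \<le> - \<mu>"
    using ev' eig_finite[OF S] by (intro Min_le) auto
  hence "Min {l. eigenvalue ?S l} * scalar_prod v v \<le> (- \<mu>) * scalar_prod v v"
    using sp_self_nonneg[of v] by (rule mult_right_mono)
  also have "(- \<mu>) * scalar_prod v v \<le> scalar_prod v (?S *\<^sub>v v)"
  proof -
    have "scalar_prod v ((- ?S) *\<^sub>v v) = - scalar_prod v (?S *\<^sub>v v)"
    proof -
      have "(- ?S) *\<^sub>v v = - (?S *\<^sub>v v)" using v S A by (intro uminus_mult_mat_vec) auto
      moreover have "scalar_prod v (- (?S *\<^sub>v v)) = - scalar_prod v (?S *\<^sub>v v)"
        using v S A by (intro scalar_prod_uminus_right) auto
      ultimately show ?thesis by simp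
    qed
    then show ?thesis using b v by force
  qed
  also have "\<dots> = scalar_prod (A *\<^sub>v v) (A *\<^sub>v v)" using gram[OF A v] by simp
  finally have "sqrt (Min {l. eigenvalue ?S l}) * sqrt (scalar_prod v v) \<le> sqrt (scalar_prod (A *\<^sub>v v) (A *\<^sub>v v))"
    by (simp add: real_sqrt_mult[symmetric])
  then show ?thesis by (simp add: vnorm2_sp sigma_min_def)
qed



lemma sum_blocks: fixes Ns Nt :: nat shows "(\<Sum>q<Ns*Nt. g q) = (\<Sum>m<Nt. \<Sum>i<Ns. g (m*Ns + i))"
proof (induction Nt)
  case 0 then show ?case by simp
next
  case (Suc Nt)
  have "(\<Sum>q<Ns*Suc Nt. g q) = (\<Sum>q<Ns*Nt. g q) + (\<Sum>q\<in>{Ns*Nt..<Ns*Nt+Ns}. g q)"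
    by (simp add: sum.atLeastLessThan_concat[symmetric] lessThan_atLeast0 algebra_simps)
  also have "(\<Sum>q\<in>{Ns*Nt..<Ns*Nt+Ns}. g q) = (\<Sum>i<Ns. g (Nt*Ns + i))"
    by (rule sum.reindex_bij_witness[of _ "\<lambda>i. Nt*Ns+i" "\<lambda>q. q - Nt*Ns"]) (auto simp: mult.commute)
  finally show ?case using Suc by simp
qed

definition Fv :: "nat \<Rightarrow> nat \<Rightarrow> real \<Rightarrow> (real vec \<Rightarrow> real \<Rightarrow> real vec) \<Rightarrow> real vec \<Rightarrow> real vec \<Rightarrow> real vec" where
  "Fv Ns Nt dt f x0 w = vec (Ns*Nt) (\<lambda>q. vec_index (f (blk Ns x0 w (q div Ns + 1)) (real (q div Ns + 1) * dt)) (q mod Ns))"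

definition Dop :: "nat \<Rightarrow> nat \<Rightarrow> (nat \<Rightarrow> nat) \<Rightarrow> (nat \<Rightarrow> nat \<Rightarrow> real) \<Rightarrow> real vec \<Rightarrow> real vec" where
  "Dop Ns Nt k c z = vec (Ns*Nt) (\<lambda>p. \<Sum>j\<in>{j\<in>{0..k (p div Ns + 1)}. j \<le> p div Ns}.
      c (p div Ns + 1) j * vec_index z ((p div Ns - j)*Ns + p mod Ns))"

lemma lm_mat_carrier: "lm_mat Ns Nt k c \<in> carrier_mat (Ns*Nt) (Ns*Nt)"
  by (simp add: lm_mat_def)

lemma mat_eq: assumes z: "z \<in> carrier_vec (Ns*Nt)" and Ns: "0 < Ns"
  shows "lm_mat Ns Nt k c *\<^sub>v z = Dop Ns Nt k c z"
proof (rule eq_vecI)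
  fix p assume "p < dim_vec (Dop Ns Nt k c z)"
  hence p: "p < Ns*Nt" by (simp add: Dop_def)
  define pd where "pd = p div Ns"
  define i0 where "i0 = p mod Ns"
  have i0: "i0 < Ns" using Ns by (simp add: i0_def)
  have pd: "pd < Nt" using p Ns unfolding pd_def by (simp add: less_mult_imp_div_less mult.commute)
  have "vec_index (lm_mat Ns Nt k c *\<^sub>v z) p = (\<Sum>q<Ns*Nt. lm_mat Ns Nt k c $$ (p,q) * vec_index z q)"
    using p z by (simp add: lm_mat_def scalar_prod_def lessThan_atLeast0 Matrix.row_def)
  also have "\<dots> = (\<Sum>m<Nt. \<Sum>i<Ns. lm_mat Ns Nt k c $$ (p,m*Ns+i) * vec_index z (m*Ns+i))"
    by (rule sum_blocks)
  also have "\<dots> = (\<Sum>m<Nt. if m \<le> pd \<and> pd - m \<le> k (pd+1) then c (pd+1) (pd - m) * vec_index z (m*Ns+i0) else 0)"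
  proof (rule sum.cong[OF refl])
    fix m assume m: "m \<in> {..<Nt}"
    have "(\<Sum>i<Ns. lm_mat Ns Nt k c $$ (p,m*Ns+i) * vec_index z (m*Ns+i))
      = (\<Sum>i<Ns. if i = i0 then (if m \<le> pd \<and> pd - m \<le> k (pd+1) then c (pd+1) (pd - m) * vec_index z (m*Ns+i0) else 0) else 0)"
    proof (rule sum.cong[OF refl])
      fix i assume i: "i \<in> {..<Ns}"
      have q: "m*Ns+i < Ns*Nt"
      proof -
        have "m*Ns+i < m*Ns + Ns" using i by simp
        also have "\<dots> = (m+1)*Ns" by simp
        also have "\<dots> \<le> Nt*Ns" using m by (intro mult_right_mono) auto
        finally show ?thesis by (simp add: mult.commute)
      qed
      have dm: "(m*Ns+i) div Ns = m" "(m*Ns+i) mod Ns = i" using i by auto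
      show "lm_mat Ns Nt k c $$ (p,m*Ns+i) * vec_index z (m*Ns+i) = (if i = i0 then (if m \<le> pd \<and> pd - m \<le> k (pd+1) then c (pd+1) (pd - m) * vec_index z (m*Ns+i0) else 0) else 0)"
        using p q dm by (auto simp: lm_mat_def Let_def pd_def i0_def)
    qed
    also have "\<dots> = (if m \<le> pd \<and> pd - m \<le> k (pd+1) then c (pd+1) (pd - m) * vec_index z (m*Ns+i0) else 0)"
      using i0 by simp
    finally show "(\<Sum>i<Ns. lm_mat Ns Nt k c $$ (p,m*Ns+i) * vec_index z (m*Ns+i)) = \<dots>" .
  qed
  also have "\<dots> = (\<Sum>m\<in>{m\<in>{..<Nt}. m \<le> pd \<and> pd - m \<le> k (pd+1)}. c (pd+1) (pd - m) * vec_index z (m*Ns+i0))"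
    by (subst sum.inter_filter) auto
  also have "\<dots> = (\<Sum>j\<in>{j\<in>{0..k (pd + 1)}. j \<le> pd}. c (pd + 1) j * vec_index z ((pd - j)*Ns + i0))"
    by (rule sum.reindex_bij_witness[of _ "\<lambda>j. pd - j" "\<lambda>m. pd - m"]) (use pd in auto)
  also have "\<dots> = vec_index (Dop Ns Nt k c z) p"
    using p by (simp add: Dop_def pd_def i0_def)
  finally show "vec_index (lm_mat Ns Nt k c *\<^sub>v z) p = vec_index (Dop Ns Nt k c z) p" .
qed (simp add: lm_mat_def Dop_def)

lemma sum_diff_cut:
  fixes a b c :: "nat \<Rightarrow> real"
  assumes "\<And>j. j > pd \<Longrightarrow> a j = b j"
  shows "(\<Sum>j\<in>{0..K}. c j * a j) - (\<Sum>j\<in>{0..K}. c j * b j) = (\<Sum>j\<in>{j\<in>{0..K}. j \<le> pd}. c j * (a j - b j))"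
proof -
  have "(\<Sum>j\<in>{0..K}. c j * a j) - (\<Sum>j\<in>{0..K}. c j * b j) = (\<Sum>j\<in>{0..K}. if j \<le> pd then c j * (a j - b j) else 0)"
    by (subst sum_subtractf[symmetric]) (intro sum.cong refl, use assms in \<open>auto simp: algebra_simps\<close>)
  also have "\<dots> = (\<Sum>j\<in>{j\<in>{0..K}. j \<le> pd}. c j * (a j - b j))"
    by (subst sum.inter_filter) auto
  finally show ?thesis .
qed

lemma idx_bound: fixes p Ns Nt j :: nat assumes "p < Ns*Nt" "0 < Ns" "j \<le> p div Ns"
  shows "(p div Ns - j)*Ns + p mod Ns < Ns*Nt"
proof -
  have "(p div Ns - j)*Ns + p mod Ns \<le> (p div Ns)*Ns + p mod Ns"
    using mult_le_mono1[OF diff_le_self[of "p div Ns" j], of Ns] by linarith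
  also have "\<dots> = p" by simp
  finally show ?thesis using assms by simp
qed

lemma res_diff:
  assumes Ns: "0 < Ns" and w: "w \<in> carrier_vec (Ns*Nt)" and y: "y \<in> carrier_vec (Ns*Nt)"
  shows "st_res Ns Nt dt f x0 k alpha beta w - st_res Ns Nt dt f x0 k alpha beta y
    = Dop Ns Nt k alpha (w - y) - dt \<cdot>\<^sub>v Dop Ns Nt k beta (Fv Ns Nt dt f x0 w - Fv Ns Nt dt f x0 y)"
proof (rule eq_vecI)
  fix p assume "p < dim_vec (Dop Ns Nt k alpha (w - y) - dt \<cdot>\<^sub>v Dop Ns Nt k beta (Fv Ns Nt dt f x0 w - Fv Ns Nt dt f x0 y))"
  hence p: "p < Ns*Nt" by (simp add: Dop_def)
  define pd where "pd = p div Ns"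
  define i0 where "i0 = p mod Ns"
  have i0: "i0 < Ns" using Ns by (simp add: i0_def)
  have idx: "(pd - j)*Ns + i0 < Ns*Nt" if "j \<le> pd" for j
    using idx_bound[OF p Ns, of j] that by (simp add: pd_def i0_def)
  have dm: "((pd - j)*Ns + i0) div Ns = pd - j" "((pd - j)*Ns + i0) mod Ns = i0" for j using i0 by auto
  let ?K = "k (pd + 1)"
  let ?a = "\<lambda>v j. vec_index (blk Ns x0 v (pd + 1 - j)) i0"
  let ?b = "\<lambda>v j. vec_index (f (blk Ns x0 v (pd + 1 - j)) (real (pd + 1 - j) * dt)) i0"
  have e1: "(\<Sum>j\<in>{0..?K}. alpha (pd+1) j * ?a w j) - (\<Sum>j\<in>{0..?K}. alpha (pd+1) j * ?a y j)
     = vec_index (Dop Ns Nt k alpha (w - y)) p"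
  proof -
    have "(\<Sum>j\<in>{0..?K}. alpha (pd+1) j * ?a w j) - (\<Sum>j\<in>{0..?K}. alpha (pd+1) j * ?a y j)
      = (\<Sum>j\<in>{j\<in>{0..?K}. j \<le> pd}. alpha (pd+1) j * (?a w j - ?a y j))"
      by (rule sum_diff_cut) (simp add: blk_def)
    also have "\<dots> = (\<Sum>j\<in>{j\<in>{0..?K}. j \<le> pd}. alpha (pd+1) j * vec_index (w - y) ((pd - j)*Ns + i0))"
    proof (rule sum.cong[OF refl])
      fix j assume "j \<in> {j\<in>{0..?K}. j \<le> pd}"
      hence j: "j \<le> pd" by simp
      hence "pd + 1 - j = Suc (pd - j)" by simp
      then show "alpha (pd+1) j * (?a w j - ?a y j) = alpha (pd+1) j * vec_index (w - y) ((pd - j)*Ns + i0)"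
        using idx[OF j] w y i0 by (simp add: blk_def)
    qed
    also have "\<dots> = vec_index (Dop Ns Nt k alpha (w - y)) p"
      using p by (simp add: Dop_def pd_def i0_def)
    finally show ?thesis .
  qed
  have e2: "(\<Sum>j\<in>{0..?K}. beta (pd+1) j * ?b w j) - (\<Sum>j\<in>{0..?K}. beta (pd+1) j * ?b y j)
     = vec_index (Dop Ns Nt k beta (Fv Ns Nt dt f x0 w - Fv Ns Nt dt f x0 y)) p"
  proof -
    have "(\<Sum>j\<in>{0..?K}. beta (pd+1) j * ?b w j) - (\<Sum>j\<in>{0..?K}. beta (pd+1) j * ?b y j)
      = (\<Sum>j\<in>{j\<in>{0..?K}. j \<le> pd}. beta (pd+1) j * (?b w j - ?b y j))"
      by (rule sum_diff_cut) (simp add: blk_def)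
    also have "\<dots> = (\<Sum>j\<in>{j\<in>{0..?K}. j \<le> pd}. beta (pd+1) j * vec_index (Fv Ns Nt dt f x0 w - Fv Ns Nt dt f x0 y) ((pd - j)*Ns + i0))"
    proof (rule sum.cong[OF refl])
      fix j assume "j \<in> {j\<in>{0..?K}. j \<le> pd}"
      hence j: "j \<le> pd" by simp
      hence "pd + 1 - j = pd - j + 1" by simp
      then show "beta (pd+1) j * (?b w j - ?b y j) = beta (pd+1) j * vec_index (Fv Ns Nt dt f x0 w - Fv Ns Nt dt f x0 y) ((pd - j)*Ns + i0)"
        using idx[OF j] dm[of j] by (simp add: Fv_def)
    qed
    also have "\<dots> = vec_index (Dop Ns Nt k beta (Fv Ns Nt dt f x0 w - Fv Ns Nt dt f x0 y)) p"
      using p by (simp add: Dop_def pd_def i0_def)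
    finally show ?thesis .
  qed
  have "vec_index (st_res Ns Nt dt f x0 k alpha beta w - st_res Ns Nt dt f x0 k alpha beta y) p
     = ((\<Sum>j\<in>{0..?K}. alpha (pd+1) j * ?a w j) - dt * (\<Sum>j\<in>{0..?K}. beta (pd+1) j * ?b w j))
     - ((\<Sum>j\<in>{0..?K}. alpha (pd+1) j * ?a y j) - dt * (\<Sum>j\<in>{0..?K}. beta (pd+1) j * ?b y j))"
    using p i0 by (simp add: st_res_def lm_res_def pd_def i0_def)
  also have "\<dots> = vec_index (Dop Ns Nt k alpha (w - y)) p - dt * vec_index (Dop Ns Nt k beta (Fv Ns Nt dt f x0 w - Fv Ns Nt dt f x0 y)) p"
    unfolding e1[symmetric] e2[symmetric] by (simp add: algebra_simps)
  also have "\<dots> = vec_index (Dop Ns Nt k alpha (w - y) - dt \<cdot>\<^sub>v Dop Ns Nt k beta (Fv Ns Nt dt f x0 w - Fv Ns Nt dt f x0 y)) p"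
    using p by (simp add: Dop_def)
  finally show "vec_index (st_res Ns Nt dt f x0 k alpha beta w - st_res Ns Nt dt f x0 k alpha beta y) p = \<dots>" .
qed (simp add: Dop_def st_res_def)

lemma vnorm2_L2: "vnorm2 v = L2_set (vec_index v) {..<dim_vec v}"
  by (simp add: vnorm2_def L2_set_def)

lemma vnorm2_nonneg: "0 \<le> vnorm2 v"
  by (simp add: vnorm2_def sum_nonneg)

lemma vnorm2_add: assumes "a \<in> carrier_vec n" "b \<in> carrier_vec n"
  shows "vnorm2 (a + b) \<le> vnorm2 a + vnorm2 b"
proof -
  have "vnorm2 (a + b) = L2_set (\<lambda>i. vec_index a i + vec_index b i) {..<n}"
    unfolding vnorm2_L2 using assms by (intro L2_set_cong) auto
  also have "\<dots> \<le> L2_set (vec_index a) {..<n} + L2_set (vec_index b) {..<n}"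
    by (rule L2_set_triangle_ineq)
  finally show ?thesis using assms by (simp add: vnorm2_L2)
qed

lemma vnorm2_diff: assumes "a \<in> carrier_vec n" "b \<in> carrier_vec n"
  shows "vnorm2 (a - b) \<le> vnorm2 a + vnorm2 b"
proof -
  have "vnorm2 (a - b) = L2_set (\<lambda>i. vec_index a i + (- vec_index b i)) {..<n}"
    unfolding vnorm2_L2 using assms by (intro L2_set_cong) auto
  also have "\<dots> \<le> L2_set (vec_index a) {..<n} + L2_set (\<lambda>i. - vec_index b i) {..<n}"
    by (rule L2_set_triangle_ineq)
  also have "L2_set (\<lambda>i. - vec_index b i) {..<n} = L2_set (vec_index b) {..<n}"
    by (simp add: L2_set_def)
  finally show ?thesis using assms by (simp add: vnorm2_L2)
qed

lemma vnorm2_rev: assumes "a \<in> carrier_vec n" "b \<in> carrier_vec n"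
  shows "vnorm2 a \<le> vnorm2 (a - b) + vnorm2 b"
proof -
  have "a = (a - b) + b" using assms by auto
  then have "vnorm2 a = vnorm2 ((a - b) + b)" by simp
  also have "\<dots> \<le> vnorm2 (a - b) + vnorm2 b" using assms by (intro vnorm2_add) auto
  finally show ?thesis .
qed

lemma vnorm2_smult: "vnorm2 (c \<cdot>\<^sub>v v) = \<bar>c\<bar> * vnorm2 v"
proof -
  have "vnorm2 (c \<cdot>\<^sub>v v) = sqrt (c^2 * (\<Sum>i<dim_vec v. (vec_index v i)^2))"
    by (simp add: vnorm2_def sum_distrib_left power_mult_distrib)
  then show ?thesis by (simp add: real_sqrt_mult vnorm2_def)
qed

lemma vnorm2_comm: assumes "a \<in> carrier_vec n" "b \<in> carrier_vec n"
  shows "vnorm2 (a - b) = vnorm2 (b - a)"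
proof -
  have "b - a = (-1) \<cdot>\<^sub>v (a - b)" using assms by (intro eq_vecI) auto
  then show ?thesis by (simp add: vnorm2_smult)
qed

lemma sp_blocks: fixes w :: "real vec" and Ns Nt :: nat assumes "w \<in> carrier_vec (Ns*Nt)"
  shows "scalar_prod w w = (\<Sum>m<Nt. \<Sum>i<Ns. (vec_index w (m*Ns+i))^2)"
  using assms by (simp add: sp_self_sum sum_blocks)

lemma sqrt_le_sq: assumes "sqrt a \<le> L * sqrt b" "0 \<le> a" "0 \<le> b" "0 \<le> L"
  shows "a \<le> L^2 * b"
proof -
  have "(sqrt a)^2 \<le> (L * sqrt b)^2" using assms by (intro power_mono) auto
  then show ?thesis using assms by (simp add: power_mult_distrib)
qed

lemma Fv_lip:
  fixes Lf T dt :: real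
  assumes Ns: "0 < Ns" and dt: "0 \<le> dt" "real Nt * dt \<le> T"
    and f_dim: "\<And>w t. w \<in> carrier_vec Ns \<Longrightarrow> f w t \<in> carrier_vec Ns"
    and lip: "\<And>w y t. w \<in> carrier_vec Ns \<Longrightarrow> y \<in> carrier_vec Ns \<Longrightarrow> 0 \<le> t \<Longrightarrow> t \<le> T \<Longrightarrow>
                     vnorm2 (f w t - f y t) \<le> Lf * vnorm2 (w - y)"
    and Lf: "0 \<le> Lf"
    and w: "w \<in> carrier_vec (Ns*Nt)" and y: "y \<in> carrier_vec (Ns*Nt)"
  shows "vnorm2 (Fv Ns Nt dt f x0 w - Fv Ns Nt dt f x0 y) \<le> Lf * vnorm2 (w - y)"
proof -
  let ?D = "Fv Ns Nt dt f x0 w - Fv Ns Nt dt f x0 y"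
  let ?bw = "\<lambda>m. blk Ns x0 w (m + 1)"
  let ?by = "\<lambda>m. blk Ns x0 y (m + 1)"
  let ?t = "\<lambda>m. real (m + 1) * dt"
  have D: "?D \<in> carrier_vec (Ns*Nt)" by (simp add: Fv_def)
  have bc: "?bw m \<in> carrier_vec Ns" "?by m \<in> carrier_vec Ns" for m by (auto simp: blk_def)
  have blockle: "(\<Sum>i<Ns. (vec_index ?D (m*Ns+i))^2) \<le> Lf^2 * (\<Sum>i<Ns. (vec_index (w - y) (m*Ns+i))^2)"
    if m: "m < Nt" for m
  proof -
    have q: "m*Ns+i < Ns*Nt" if "i < Ns" for i
    proof -
      have "m*Ns+i < m*Ns + Ns" using that by simp
      also have "\<dots> = (m+1)*Ns" by simp
      also have "\<dots> \<le> Nt*Ns" using m by (intro mult_right_mono) auto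
      finally show ?thesis by (simp add: mult.commute)
    qed
    have t: "0 \<le> ?t m" "?t m \<le> T"
    proof -
      show "0 \<le> ?t m" using dt by simp
      have "?t m \<le> real Nt * dt" using m dt by (intro mult_right_mono) auto
      then show "?t m \<le> T" using dt by simp
    qed
    have fa: "f (?bw m) (?t m) \<in> carrier_vec Ns" "f (?by m) (?t m) \<in> carrier_vec Ns" using f_dim bc by auto
    have e1: "(\<Sum>i<Ns. (vec_index ?D (m*Ns+i))^2) = scalar_prod (f (?bw m) (?t m) - f (?by m) (?t m)) (f (?bw m) (?t m) - f (?by m) (?t m))"
      unfolding sp_self_sum using fa q by (intro sum.cong) (auto simp: Fv_def)
    have e2: "(\<Sum>i<Ns. (vec_index (w - y) (m*Ns+i))^2) = scalar_prod (?bw m - ?by m) (?bw m - ?by m)"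
      unfolding sp_self_sum using w y q by (intro sum.cong) (auto simp: blk_def)
    have "sqrt (scalar_prod (f (?bw m) (?t m) - f (?by m) (?t m)) (f (?bw m) (?t m) - f (?by m) (?t m)))
        \<le> Lf * sqrt (scalar_prod (?bw m - ?by m) (?bw m - ?by m))"
      using lip[OF bc t] by (simp add: vnorm2_sp)
    then show ?thesis unfolding e1 e2 using Lf by (intro sqrt_le_sq sp_self_nonneg)
  qed
  have "(\<Sum>m<Nt. \<Sum>i<Ns. (vec_index ?D (m*Ns+i))^2) \<le> (\<Sum>m<Nt. Lf^2 * (\<Sum>i<Ns. (vec_index (w - y) (m*Ns+i))^2))"
    by (rule sum_mono) (use blockle in auto)
  also have "\<dots> = Lf^2 * (\<Sum>m<Nt. \<Sum>i<Ns. (vec_index (w - y) (m*Ns+i))^2)"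
    by (rule sum_distrib_left[symmetric])
  finally have "scalar_prod ?D ?D \<le> Lf^2 * scalar_prod (w - y) (w - y)"
    unfolding sp_blocks[OF D] sp_blocks[of "w - y" Ns Nt, OF minus_carrier_vec[OF w y]] .
  hence "sqrt (scalar_prod ?D ?D) \<le> sqrt (Lf^2 * scalar_prod (w - y) (w - y))" by simp
  then show ?thesis using Lf by (simp add: vnorm2_sp real_sqrt_mult)
qed

lemma sigma_max_nonneg: assumes M: "(M::real mat) \<in> carrier_mat m n" and n: "0 < n"
  shows "0 \<le> sigma_max M"
proof -
  let ?v = "vec n (\<lambda>_. 1::real)"
  have v: "?v \<in> carrier_vec n" by simp
  have "vnorm2 ?v = sqrt (real n)" by (simp add: vnorm2_def)
  hence pos: "vnorm2 ?v > 0" using n by simp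
  have "0 \<le> sigma_max M * vnorm2 ?v"
    using sigma_max_bound[OF M n v] vnorm2_nonneg[of "M *\<^sub>v ?v"] by linarith
  then show ?thesis using pos by (simp add: zero_le_mult_iff)
qed

theorem mainTheorem3:
  fixes Ns Nt nst zb :: nat and T Lf P :: real
    and f :: "real vec \<Rightarrow> real \<Rightarrow> real vec" and x0 :: "real vec"
    and k :: "nat \<Rightarrow> nat" and alpha beta :: "nat \<Rightarrow> nat \<Rightarrow> real"
    and pib :: "nat \<Rightarrow> real vec" and Abar :: "real mat"
    and x xt :: "real vec"
  assumes Ns_pos: "Ns > 0" and Nt_pos: "Nt > 0" and T_pos: "T > 0"
    and x0_dim: "x0 \<in> carrier_vec Ns"
    and f_dim: "\<And>w t. w \<in> carrier_vec Ns \<Longrightarrow> f w t \<in> carrier_vec Ns"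
    and k_le: "\<And>n. 1 \<le> n \<Longrightarrow> n \<le> Nt \<Longrightarrow> k n \<le> n"
    and alpha0: "\<And>n. 1 \<le> n \<Longrightarrow> n \<le> Nt \<Longrightarrow> alpha n 0 \<noteq> 0"
    and pi_dim: "\<And>i. 1 \<le> i \<Longrightarrow> i \<le> nst \<Longrightarrow> pib i \<in> carrier_vec (Ns * Nt)"
    and Abar_dim: "Abar \<in> carrier_mat zb (Ns * Nt)"
    and Lf_pos: "Lf > 0"
    and lipschitz: "\<And>w y t. w \<in> carrier_vec Ns \<Longrightarrow> y \<in> carrier_vec Ns \<Longrightarrow> 0 \<le> t \<Longrightarrow> t \<le> T \<Longrightarrow>
                     vnorm2 (f w t - f y t) \<le> Lf * vnorm2 (w - y)"
    and dt_small: "(T / real Nt) * Lf * sigma_max (lm_mat Ns Nt k beta) < sigma_min (lm_mat Ns Nt k alpha)"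
    and P_pos: "P > 0"
    and P_bound: "\<And>w. w \<in> trial_space Ns Nt x0 nst pib \<Longrightarrow>
        vnorm2 (Abar *\<^sub>v st_res Ns Nt (T / real Nt) f x0 k alpha beta w)
          \<ge> P * vnorm2 (st_res Ns Nt (T / real Nt) f x0 k alpha beta w)"
    and x_dim: "x \<in> carrier_vec (Ns * Nt)"
    and x_sol: "st_res Ns Nt (T / real Nt) f x0 k alpha beta x = 0\<^sub>v (Ns * Nt)"
    and xt_in: "xt \<in> trial_space Ns Nt x0 nst pib"
    and xt_min: "\<And>w. w \<in> trial_space Ns Nt x0 nst pib \<Longrightarrow>
        vnorm2 (Abar *\<^sub>v st_res Ns Nt (T / real Nt) f x0 k alpha beta xt)
          \<le> vnorm2 (Abar *\<^sub>v st_res Ns Nt (T / real Nt) f x0 k alpha beta w)"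
  shows "vnorm2 (x - xt) \<le>
     (1 / P) * ((sigma_max (Abar * lm_mat Ns Nt k alpha)
                 + (T / real Nt) * Lf * sigma_max (Abar * lm_mat Ns Nt k beta))
               / (sigma_min (lm_mat Ns Nt k alpha) - (T / real Nt) * Lf * sigma_max (lm_mat Ns Nt k beta)))
     * (INF w\<in>trial_space Ns Nt x0 nst pib. vnorm2 (x - w))"
proof -
  define dt where "dt = T / real Nt"
  define N where "N = Ns * Nt"
  have N: "0 < N" using Ns_pos Nt_pos by (simp add: N_def)
  have dt: "0 < dt" using T_pos Nt_pos by (simp add: dt_def)
  have dtT: "real Nt * dt \<le> T" using Nt_pos by (simp add: dt_def)
  define A where "A = lm_mat Ns Nt k alpha"
  define B where "B = lm_mat Ns Nt k beta"
  have A: "A \<in> carrier_mat N N" and B: "B \<in> carrier_mat N N"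
    by (simp_all add: A_def B_def N_def lm_mat_carrier)
  have AbA: "Abar * A \<in> carrier_mat zb N" and AbB: "Abar * B \<in> carrier_mat zb N"
    using A B Abar_dim by (auto simp: N_def)
  let ?r = "st_res Ns Nt dt f x0 k alpha beta"
  let ?F = "Fv Ns Nt dt f x0"
  have Fc: "?F w \<in> carrier_vec N" for w by (simp add: Fv_def N_def)
  have rc: "?r w \<in> carrier_vec N" for w by (simp add: st_res_def N_def)
  have xc: "x \<in> carrier_vec N" using x_dim by (simp add: N_def)
  have Sc: "w \<in> carrier_vec N" if "w \<in> trial_space Ns Nt x0 nst pib" for w
    using that by (auto simp: trial_space_def N_def)
  have xtc: "xt \<in> carrier_vec N" using Sc[OF xt_in] .
  have Fl: "vnorm2 (?F w - ?F y) \<le> Lf * vnorm2 (w - y)" if "w \<in> carrier_vec N" "y \<in> carrier_vec N" for w y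
    using that by (intro Fv_lip[OF Ns_pos less_imp_le[OF dt] dtT f_dim lipschitz less_imp_le[OF Lf_pos]]) (auto simp: N_def)
  have res: "?r w = A *\<^sub>v (w - x) - dt \<cdot>\<^sub>v (B *\<^sub>v (?F w - ?F x))" if w: "w \<in> carrier_vec N" for w
  proof -
    have "?r w = ?r w - ?r x" using x_sol rc[of w] by (simp add: dt_def N_def)
    also have "\<dots> = Dop Ns Nt k alpha (w - x) - dt \<cdot>\<^sub>v Dop Ns Nt k beta (?F w - ?F x)"
      using res_diff[OF Ns_pos] w xc by (simp add: N_def)
    also have "\<dots> = A *\<^sub>v (w - x) - dt \<cdot>\<^sub>v (B *\<^sub>v (?F w - ?F x))"
      unfolding A_def B_def using w xc Fc Ns_pos
      by (subst (1 2) mat_eq) (auto simp: N_def)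
    finally show ?thesis .
  qed
  have smB: "0 \<le> sigma_max B" using sigma_max_nonneg[OF B N] .
  define den where "den = sigma_min A - dt * Lf * sigma_max B"
  have den: "0 < den" using dt_small unfolding den_def A_def B_def dt_def by simp
  define num where "num = sigma_max (Abar * A) + dt * Lf * sigma_max (Abar * B)"
  have num: "0 \<le> num" unfolding num_def
    using sigma_max_nonneg[OF AbA N] sigma_max_nonneg[OF AbB N] dt Lf_pos by simp
  have step1: "den * vnorm2 (xt - x) \<le> vnorm2 (?r xt)"
  proof -
    let ?e = "xt - x" and ?d = "?F xt - ?F x"
    have e: "?e \<in> carrier_vec N" and d: "?d \<in> carrier_vec N" using xtc xc Fc by auto
    have Ae: "A *\<^sub>v ?e \<in> carrier_vec N" and Bd: "dt \<cdot>\<^sub>v (B *\<^sub>v ?d) \<in> carrier_vec N" using A B e d by auto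
    have "sigma_min A * vnorm2 ?e \<le> vnorm2 (A *\<^sub>v ?e)" by (rule sigma_min_bound[OF A N e])
    also have "\<dots> \<le> vnorm2 (A *\<^sub>v ?e - dt \<cdot>\<^sub>v (B *\<^sub>v ?d)) + vnorm2 (dt \<cdot>\<^sub>v (B *\<^sub>v ?d))"
      by (rule vnorm2_rev[OF Ae Bd])
    also have "vnorm2 (dt \<cdot>\<^sub>v (B *\<^sub>v ?d)) \<le> dt * (sigma_max B * (Lf * vnorm2 ?e))"
    proof -
      have "vnorm2 (dt \<cdot>\<^sub>v (B *\<^sub>v ?d)) = dt * vnorm2 (B *\<^sub>v ?d)" using dt by (simp add: vnorm2_smult)
      also have "\<dots> \<le> dt * (sigma_max B * vnorm2 ?d)"
        using sigma_max_bound[OF B N d] dt by (intro mult_left_mono) auto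
      also have "\<dots> \<le> dt * (sigma_max B * (Lf * vnorm2 ?e))"
        using Fl[OF xtc xc] dt smB by (intro mult_left_mono) auto
      finally show ?thesis .
    qed
    finally have "sigma_min A * vnorm2 ?e \<le> vnorm2 (?r xt) + dt * (sigma_max B * (Lf * vnorm2 ?e))"
      using res[OF xtc] by simp
    then show ?thesis unfolding den_def by (simp add: algebra_simps)
  qed
  have step3: "vnorm2 (Abar *\<^sub>v ?r w) \<le> num * vnorm2 (x - w)" if wS: "w \<in> trial_space Ns Nt x0 nst pib" for w
  proof -
    have w: "w \<in> carrier_vec N" using Sc[OF wS] .
    let ?e = "w - x" and ?d = "?F w - ?F x"
    have e: "?e \<in> carrier_vec N" and d: "?d \<in> carrier_vec N" using w xc Fc by auto
    have Abar: "Abar \<in> carrier_mat zb N" using Abar_dim by (simp add: N_def)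
    have "Abar *\<^sub>v ?r w = Abar *\<^sub>v (A *\<^sub>v ?e) - Abar *\<^sub>v (dt \<cdot>\<^sub>v (B *\<^sub>v ?d))"
      unfolding res[OF w] using A B e d Abar by (intro mult_minus_distrib_mat_vec) auto
    also have "\<dots> = (Abar * A) *\<^sub>v ?e - dt \<cdot>\<^sub>v ((Abar * B) *\<^sub>v ?d)"
      using A B e d Abar by (simp add: assoc_mult_mat_vec[of _ zb N] mult_mat_vec[of _ zb N])
    finally have eq: "Abar *\<^sub>v ?r w = (Abar * A) *\<^sub>v ?e - dt \<cdot>\<^sub>v ((Abar * B) *\<^sub>v ?d)" .
    have c1: "(Abar * A) *\<^sub>v ?e \<in> carrier_vec zb" and c2: "dt \<cdot>\<^sub>v ((Abar * B) *\<^sub>v ?d) \<in> carrier_vec zb"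
      using AbA AbB e d by auto
    have "vnorm2 (Abar *\<^sub>v ?r w) \<le> vnorm2 ((Abar * A) *\<^sub>v ?e) + vnorm2 (dt \<cdot>\<^sub>v ((Abar * B) *\<^sub>v ?d))"
      unfolding eq by (rule vnorm2_diff[OF c1 c2])
    also have "vnorm2 ((Abar * A) *\<^sub>v ?e) \<le> sigma_max (Abar * A) * vnorm2 ?e"
      by (rule sigma_max_bound[OF AbA N e])
    also have "vnorm2 (dt \<cdot>\<^sub>v ((Abar * B) *\<^sub>v ?d)) \<le> dt * (sigma_max (Abar * B) * (Lf * vnorm2 ?e))"
    proof -
      have "vnorm2 (dt \<cdot>\<^sub>v ((Abar * B) *\<^sub>v ?d)) = dt * vnorm2 ((Abar * B) *\<^sub>v ?d)" using dt by (simp add: vnorm2_smult)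
      also have "\<dots> \<le> dt * (sigma_max (Abar * B) * vnorm2 ?d)"
        using sigma_max_bound[OF AbB N d] dt by (intro mult_left_mono) auto
      also have "\<dots> \<le> dt * (sigma_max (Abar * B) * (Lf * vnorm2 ?e))"
        using Fl[OF w xc] dt sigma_max_nonneg[OF AbB N] by (intro mult_left_mono) auto
      finally show ?thesis .
    qed
    finally have "vnorm2 (Abar *\<^sub>v ?r w) \<le> num * vnorm2 ?e" unfolding num_def by (simp add: algebra_simps)
    also have "vnorm2 ?e = vnorm2 (x - w)" using vnorm2_comm[OF w xc] .
    finally show ?thesis .
  qed
  define C where "C = (1 / P) * (num / den)"
  have C: "0 \<le> C" unfolding C_def using P_pos num den by simp
  have bound: "vnorm2 (x - xt) \<le> C * vnorm2 (x - w)" if wS: "w \<in> trial_space Ns Nt x0 nst pib" for w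
  proof -
    have "P * vnorm2 (?r xt) \<le> vnorm2 (Abar *\<^sub>v ?r xt)" using P_bound[OF xt_in] by (simp add: dt_def)
    also have "\<dots> \<le> vnorm2 (Abar *\<^sub>v ?r w)" using xt_min[OF wS] by (simp add: dt_def)
    also have "\<dots> \<le> num * vnorm2 (x - w)" by (rule step3[OF wS])
    finally have h1: "P * vnorm2 (?r xt) \<le> num * vnorm2 (x - w)" .
    have h2: "P * (den * vnorm2 (xt - x)) \<le> P * vnorm2 (?r xt)" using step1 P_pos by simp
    have "vnorm2 (x - xt) = vnorm2 (xt - x)" using vnorm2_comm[OF xc xtc] .
    hence "(P * den) * vnorm2 (x - xt) \<le> num * vnorm2 (x - w)" using h1 h2 by (simp add: algebra_simps)
    then have "vnorm2 (x - xt) \<le> num * vnorm2 (x - w) / (P * den)"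
      using P_pos den by (simp add: pos_le_divide_eq mult.commute)
    then show ?thesis unfolding C_def by (simp add: field_simps)
  qed
  have "vnorm2 (x - xt) \<le> C * (INF w\<in>trial_space Ns Nt x0 nst pib. vnorm2 (x - w))"
  proof (cases "C = 0")
    case True
    then show ?thesis using bound[OF xt_in] by simp
  next
    case False
    hence Cp: "0 < C" using C by simp
    have "vnorm2 (x - xt) / C \<le> (INF w\<in>trial_space Ns Nt x0 nst pib. vnorm2 (x - w))"
    proof (rule cINF_greatest)
      show "trial_space Ns Nt x0 nst pib \<noteq> {}" using xt_in by blast
      fix w assume "w \<in> trial_space Ns Nt x0 nst pib"
      then show "vnorm2 (x - xt) / C \<le> vnorm2 (x - w)" using bound Cp by (simp add: pos_divide_le_eq mult.commute)
    qed
    then show ?thesis using Cp by (simp add: pos_divide_le_eq mult.commute)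
  qed
  then show ?thesis unfolding C_def num_def den_def A_def B_def dt_def .
qed

end
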